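(* Let $X$ be a compact metric space and $f\colon X\to X$ continuous with $h_{\mathrm{top}}(f)<\infty$. Let $\Xi=(\xi_1,\dots,\xi_d)\in C(X)^d$ and $\varepsilon>0$ be such that $\overline{B(0,\varepsilon)}\subset\{\int\Xi\,d\mu\mid\mu\in\mathcal{M}^f(X)\}$, and let $\xi_0\in C(X)$. Write $P_0:=\inf_{q\in\mathbb{R}^d}P(\langle q,\Xi\rangle+\xi_0)$. Then (1) for every $q\in\mathbb{R}^d$ with $\|q\|>\frac1\varepsilon(P(\xi_0)+\|\xi_0\|)$, we have $P(\langle q,\Xi\rangle+\xi_0)>P_0$; (2) there exists $\bar q$ with $\|\bar q\|\le\frac1\varepsilon(P(\xi_0)+\|\xi_0\|)$ such that $P(\langle\bar q,\Xi\rangle+\xi_0)=P_0$.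
   Context: $\mathcal{M}^f(X)$ is the set of $f$-invariant Borel probability measures; $P$ is topological pressure on $X$; $\|\xi_0\|$ the sup norm, $\|q\|$ the Euclidean norm; $\int\Xi\,d\mu=(\int\xi_id\mu)_i$; $\langle q,\Xi\rangle=\sum_iq_i\xi_i$; $\overline{B(0,\varepsilon)}$ is the closed Euclidean ball. *)

theory Defs
  imports "HOL-Probability.Probability"
begin

definition bowen_dist :: "('a::metric_space \<Rightarrow> 'a) \<Rightarrow> nat \<Rightarrow> 'a \<Rightarrow> 'a \<Rightarrow> real" where
  "bowen_dist f n x y = (if n = 0 then 0 else Max ((\<lambda>i. dist ((f ^^ i) x) ((f ^^ i) y)) ` {..<n}))"

definition separated_set :: "'a set \<Rightarrow> ('a::metric_space \<Rightarrow> 'a) \<Rightarrow> nat \<Rightarrow> real \<Rightarrow> 'a set \<Rightarrow> bool" where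
  "separated_set X f n \<delta> E \<longleftrightarrow> E \<subseteq> X \<and> (\<forall>x\<in>E. \<forall>y\<in>E. x \<noteq> y \<longrightarrow> bowen_dist f n x y > \<delta>)"

definition birkhoff_sum :: "('a \<Rightarrow> 'a) \<Rightarrow> ('a \<Rightarrow> real) \<Rightarrow> nat \<Rightarrow> 'a \<Rightarrow> real" where
  "birkhoff_sum f \<phi> n x = (\<Sum>i<n. \<phi> ((f ^^ i) x))"

definition pressure_Z :: "'a set \<Rightarrow> ('a::metric_space \<Rightarrow> 'a) \<Rightarrow> ('a \<Rightarrow> real) \<Rightarrow> nat \<Rightarrow> real \<Rightarrow> real" where
  "pressure_Z X f \<phi> n \<delta> =
     Sup {(\<Sum>x\<in>E. exp (birkhoff_sum f \<phi> n x)) | E. finite E \<and> separated_set X f n \<delta> E}"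

definition pressure_delta :: "'a set \<Rightarrow> ('a::metric_space \<Rightarrow> 'a) \<Rightarrow> ('a \<Rightarrow> real) \<Rightarrow> real \<Rightarrow> ereal" where
  "pressure_delta X f \<phi> \<delta> = limsup (\<lambda>n. ereal (ln (pressure_Z X f \<phi> n \<delta>) / real n))"

text \<open>Topological pressure P(phi) = lim_{delta -> 0} P(phi,delta); the limit is monotone,
  so it equals the supremum over delta > 0.\<close>
definition top_pressure :: "'a set \<Rightarrow> ('a::metric_space \<Rightarrow> 'a) \<Rightarrow> ('a \<Rightarrow> real) \<Rightarrow> ereal" where
  "top_pressure X f \<phi> = (SUP \<delta>\<in>{0<..}. pressure_delta X f \<phi> \<delta>)"

definition top_entropy :: "'a set \<Rightarrow> ('a::metric_space \<Rightarrow> 'a) \<Rightarrow> ereal" where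
  "top_entropy X f = top_pressure X f (\<lambda>_. 0)"

definition invariant_measures :: "'a set \<Rightarrow> ('a::metric_space \<Rightarrow> 'a) \<Rightarrow> 'a measure set" where
  "invariant_measures X f = {\<mu>. prob_space \<mu> \<and> sets \<mu> = sets (restrict_space borel X) \<and>
      f \<in> measurable \<mu> \<mu> \<and> distr \<mu> \<mu> f = \<mu>}"

definition sup_norm :: "'a set \<Rightarrow> ('a \<Rightarrow> real) \<Rightarrow> real" where
  "sup_norm X \<phi> = Sup ((\<lambda>x. \<bar>\<phi> x\<bar>) ` X)"

end

theory Submission
  imports Defs
begin


lemma funpow_in: "f ` X \<subseteq> X \<Longrightarrow> x \<in> X \<Longrightarrow> (f^^i) x \<in> X"
  by (induction i) auto

lemma funpow_cont: "continuous_on X f \<Longrightarrow> f ` X \<subseteq> X \<Longrightarrow> continuous_on X (f^^i)"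
proof (induction i)
  case 0 then show ?case by (simp add: continuous_on_id)
next
  case (Suc i)
  have "continuous_on X (f \<circ> (f^^i))"
    by (rule continuous_on_compose) (use Suc funpow_in[OF Suc.prems(2)] in \<open>auto intro: continuous_on_subset\<close>)
  then show ?case by simp
qed

lemma unif_eta:
  assumes "compact X" "continuous_on X f" "f ` X \<subseteq> X" "\<delta> > 0"
  shows "\<exists>\<eta>>0. \<forall>i<n. \<forall>x\<in>X. \<forall>y\<in>X. dist x y < \<eta> \<longrightarrow> dist ((f^^i) x) ((f^^i) y) < \<delta>"
proof (induction n)
  case 0 then show ?case by (auto intro: exI[of _ 1])
next
  case (Suc n)
  then obtain \<eta> where e: "\<eta> > 0" "\<forall>i<n. \<forall>x\<in>X. \<forall>y\<in>X. dist x y < \<eta> \<longrightarrow> dist ((f^^i) x) ((f^^i) y) < \<delta>" by blast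
  have "uniformly_continuous_on X (f^^n)"
    using compact_uniformly_continuous funpow_cont assms by blast
  then obtain d where d: "d > 0" "\<forall>x\<in>X. \<forall>x'\<in>X. dist x' x < d \<longrightarrow> dist ((f^^n) x') ((f^^n) x) < \<delta>"
    using assms(4) unfolding uniformly_continuous_on_def by blast
  show ?case
  proof (intro exI[of _ "min \<eta> d"] conjI allI impI ballI)
    show "min \<eta> d > 0" using e d by simp
    fix i x y assume "i < Suc n" "x \<in> X" "y \<in> X" "dist x y < min \<eta> d"
    then show "dist ((f^^i) x) ((f^^i) y) < \<delta>"
      using e(2) d(2) by (cases "i < n") (auto simp: dist_commute less_Suc_eq)
  qed
qed

lemma sep_card_bound:
  assumes "compact X" "continuous_on X f" "f ` X \<subseteq> X" "\<delta> > 0"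
  shows "\<exists>N. \<forall>E. finite E \<and> separated_set X f n \<delta> E \<longrightarrow> card E \<le> N"
proof -
  obtain \<eta> where e: "\<eta> > 0" "\<forall>i<n. \<forall>x\<in>X. \<forall>y\<in>X. dist x y < \<eta> \<longrightarrow> dist ((f^^i) x) ((f^^i) y) < \<delta>"
    using unif_eta[OF assms] by blast
  have "X \<subseteq> (\<Union>c\<in>X. ball c (\<eta>/2))" using e(1) by auto
  then obtain K where K: "K \<subseteq> X" "finite K" "X \<subseteq> (\<Union>c\<in>K. ball c (\<eta>/2))"
    using compactE_image[OF assms(1), of X "\<lambda>c. ball c (\<eta>/2)"] by auto
  show ?thesis
  proof (intro exI[of _ "card K"] allI impI)
    fix E assume E: "finite E \<and> separated_set X f n \<delta> E"
    define g where "g x = (SOME c. c \<in> K \<and> x \<in> ball c (\<eta>/2))" for x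
    have g: "g x \<in> K \<and> x \<in> ball (g x) (\<eta>/2)" if "x \<in> X" for x
      unfolding g_def by (rule someI_ex) (use K that in blast)
    have EX: "E \<subseteq> X" using E unfolding separated_set_def by auto
    have "inj_on g E"
    proof (rule inj_onI, rule ccontr)
      fix x y assume xy: "x \<in> E" "y \<in> E" "g x = g y" "x \<noteq> y"
      then have sep: "bowen_dist f n x y > \<delta>" using E unfolding separated_set_def by auto
      have "dist x y < \<eta>" using g[of x] g[of y] xy EX dist_triangle_half_l[of x "g x" \<eta> y]
        by (auto simp: dist_commute)
      then have dd: "\<forall>i<n. dist ((f^^i) x) ((f^^i) y) < \<delta>" using e(2) xy EX by auto
      then have "bowen_dist f n x y < \<delta>"
      proof (cases "n = 0")
        case False
        then have "{..<n} \<noteq> {}" by auto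
        then show ?thesis using dd False
          unfolding bowen_dist_def by (simp only: if_False) (subst Max_less_iff, auto)
      qed (use assms(4) in \<open>simp add: bowen_dist_def\<close>)
      then show False using sep by simp
    qed
    moreover have "g ` E \<subseteq> K" using g EX by auto
    ultimately show "card E \<le> card K" using card_inj_on_le K(2) by blast
  qed
qed



definition ZS where "ZS X f \<phi> n \<delta> = {(\<Sum>x\<in>E. exp (birkhoff_sum f \<phi> n x)) | E. finite E \<and> separated_set X f n \<delta> E}"

lemma pressure_Z_ZS: "pressure_Z X f \<phi> n \<delta> = Sup (ZS X f \<phi> n \<delta>)"
  unfolding pressure_Z_def ZS_def by simp

lemma ZS_ne: "ZS X f \<phi> n \<delta> \<noteq> {}"
  unfolding ZS_def separated_set_def by auto

lemma birkhoff_le: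
  assumes "f ` X \<subseteq> X" "\<forall>x\<in>X. \<phi> x \<le> \<psi> x + c" "x \<in> X"
  shows "birkhoff_sum f \<phi> n x \<le> birkhoff_sum f \<psi> n x + real n * c"
proof -
  have "birkhoff_sum f \<phi> n x \<le> (\<Sum>i<n. \<psi> ((f ^^ i) x) + c)"
    unfolding birkhoff_sum_def by (rule sum_mono) (use assms(2) funpow_in[OF assms(1) assms(3)] in blast)
  then show ?thesis by (simp add: birkhoff_sum_def sum.distrib)
qed

lemma Z_bdd:
  assumes "compact X" "continuous_on X f" "f ` X \<subseteq> X" "\<delta> > 0" "\<forall>x\<in>X. \<bar>\<psi> x\<bar> \<le> B"
  shows "bdd_above (ZS X f \<psi> n \<delta>)"
proof -
  obtain N where N: "\<forall>E. finite E \<and> separated_set X f n \<delta> E \<longrightarrow> card E \<le> N"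
    using sep_card_bound[OF assms(1-4)] by blast
  have "s \<le> real N * exp (real n * B)" if s: "s \<in> ZS X f \<psi> n \<delta>" for s
  proof -
    obtain E where E: "s = (\<Sum>x\<in>E. exp (birkhoff_sum f \<psi> n x))" "finite E" "separated_set X f n \<delta> E"
      using s unfolding ZS_def by blast
    have EX: "E \<subseteq> X" using E(3) unfolding separated_set_def by auto
    have "s \<le> (\<Sum>x\<in>E. exp (real n * B))"
      unfolding E(1)
    proof (rule sum_mono)
      fix x assume "x \<in> E"
      have "birkhoff_sum f \<psi> n x \<le> birkhoff_sum f (\<lambda>_. 0) n x + real n * B"
        by (rule birkhoff_le[OF assms(3)]) (use assms(5) EX \<open>x \<in> E\<close> in auto)
      then show "exp (birkhoff_sum f \<psi> n x) \<le> exp (real n * B)" by (simp add: birkhoff_sum_def)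
    qed
    also have "\<dots> = real (card E) * exp (real n * B)" by simp
    also have "\<dots> \<le> real N * exp (real n * B)" using N E by simp
    finally show ?thesis .
  qed
  then show ?thesis by (rule bdd_aboveI)
qed

lemma Z_le:
  assumes bdd: "bdd_above (ZS X f \<psi> n \<delta>)" and fX: "f ` X \<subseteq> X" and le: "\<forall>x\<in>X. \<phi> x \<le> \<psi> x + c"
  shows "bdd_above (ZS X f \<phi> n \<delta>) \<and> pressure_Z X f \<phi> n \<delta> \<le> exp (real n * c) * pressure_Z X f \<psi> n \<delta>"
proof -
  have *: "s \<le> exp (real n * c) * pressure_Z X f \<psi> n \<delta>" if s: "s \<in> ZS X f \<phi> n \<delta>" for s
  proof -
    obtain E where E: "s = (\<Sum>x\<in>E. exp (birkhoff_sum f \<phi> n x))" "finite E" "separated_set X f n \<delta> E"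
      using s unfolding ZS_def by blast
    have EX: "E \<subseteq> X" using E(3) unfolding separated_set_def by auto
    have "s \<le> (\<Sum>x\<in>E. exp (real n * c) * exp (birkhoff_sum f \<psi> n x))"
      unfolding E(1)
    proof (rule sum_mono)
      fix x assume "x \<in> E"
      have "birkhoff_sum f \<phi> n x \<le> birkhoff_sum f \<psi> n x + real n * c"
        by (rule birkhoff_le[OF fX le]) (use EX \<open>x \<in> E\<close> in auto)
      then show "exp (birkhoff_sum f \<phi> n x) \<le> exp (real n * c) * exp (birkhoff_sum f \<psi> n x)"
        by (simp add: exp_add[symmetric] add.commute)
    qed
    also have "\<dots> = exp (real n * c) * (\<Sum>x\<in>E. exp (birkhoff_sum f \<psi> n x))"
      by (simp add: sum_distrib_left)
    also have "\<dots> \<le> exp (real n * c) * pressure_Z X f \<psi> n \<delta>"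
      unfolding pressure_Z_ZS
      by (rule mult_left_mono, rule cSup_upper[OF _ bdd]) (use E in \<open>auto simp: ZS_def\<close>)
    finally show ?thesis .
  qed
  have "bdd_above (ZS X f \<phi> n \<delta>)" by (rule bdd_aboveI, erule *)
  moreover have "pressure_Z X f \<phi> n \<delta> \<le> exp (real n * c) * pressure_Z X f \<psi> n \<delta>"
    unfolding pressure_Z_ZS[of X f \<phi>] by (rule cSup_least[OF ZS_ne], erule *)
  ultimately show ?thesis by (rule conjI)
qed

lemma Z_ge:
  assumes "bdd_above (ZS X f \<phi> n \<delta>)" "x \<in> X"
  shows "exp (birkhoff_sum f \<phi> n x) \<le> pressure_Z X f \<phi> n \<delta>"
proof -
  have "separated_set X f n \<delta> {x}" using assms(2) unfolding separated_set_def by simp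
  then have "exp (birkhoff_sum f \<phi> n x) \<in> ZS X f \<phi> n \<delta>"
    unfolding ZS_def by (intro CollectI exI[of _ "{x}"]) simp
  then show ?thesis unfolding pressure_Z_ZS by (rule cSup_upper[OF _ assms(1)])
qed



lemma Pd_le:
  assumes bdd: "\<And>n. bdd_above (ZS X f \<psi> n \<delta>)" and fX: "f ` X \<subseteq> X"
    and le: "\<forall>x\<in>X. \<phi> x \<le> \<psi> x + c" and c: "c \<ge> 0" and x0: "x0 \<in> X"
  shows "pressure_delta X f \<phi> \<delta> \<le> pressure_delta X f \<psi> \<delta> + ereal c"
proof -
  have ineq: "ln (pressure_Z X f \<phi> n \<delta>) / real n \<le> ln (pressure_Z X f \<psi> n \<delta>) / real n + c" for n
  proof (cases "n = 0")
    case True then show ?thesis using c by simp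
  next
    case False
    have Zl: "bdd_above (ZS X f \<phi> n \<delta>)" "pressure_Z X f \<phi> n \<delta> \<le> exp (real n * c) * pressure_Z X f \<psi> n \<delta>"
      using Z_le[OF bdd fX le] by auto
    have p1: "pressure_Z X f \<phi> n \<delta> > 0"
      using Z_ge[OF Zl(1) x0] by (meson exp_gt_zero less_le_trans)
    have p2: "pressure_Z X f \<psi> n \<delta> > 0"
      using Z_ge[OF bdd x0] by (meson exp_gt_zero less_le_trans)
    have "ln (pressure_Z X f \<phi> n \<delta>) \<le> ln (exp (real n * c) * pressure_Z X f \<psi> n \<delta>)"
      using Zl(2) p1 p2 by simp
    also have "\<dots> = real n * c + ln (pressure_Z X f \<psi> n \<delta>)"
      using p2 by (simp add: ln_mult)
    finally have "ln (pressure_Z X f \<phi> n \<delta>) \<le> real n * c + ln (pressure_Z X f \<psi> n \<delta>)" .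
    then show ?thesis using False by (simp add: divide_simps algebra_simps)
  qed
  have "pressure_delta X f \<phi> \<delta> \<le> limsup (\<lambda>n. ereal (ln (pressure_Z X f \<psi> n \<delta>) / real n) + ereal c)"
    unfolding pressure_delta_def
    by (rule Limsup_mono) (use ineq in \<open>auto intro!: always_eventually\<close>)
  also have "\<dots> = pressure_delta X f \<psi> \<delta> + ereal c"
    unfolding pressure_delta_def by (rule Limsup_add_ereal_right) auto
  finally show ?thesis .
qed

lemma P_le:
  assumes "compact X" "continuous_on X f" "f ` X \<subseteq> X" "\<forall>x\<in>X. \<bar>\<psi> x\<bar> \<le> B"
    and le: "\<forall>x\<in>X. \<phi> x \<le> \<psi> x + c" and c: "c \<ge> 0" and x0: "x0 \<in> X"
  shows "top_pressure X f \<phi> \<le> top_pressure X f \<psi> + ereal c"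
  unfolding top_pressure_def
proof (rule SUP_least)
  fix \<delta> :: real assume "\<delta> \<in> {0<..}"
  then have "\<delta> > 0" by simp
  have "pressure_delta X f \<phi> \<delta> \<le> pressure_delta X f \<psi> \<delta> + ereal c"
    by (rule Pd_le[OF Z_bdd[OF assms(1-3) \<open>\<delta> > 0\<close> assms(4)] assms(3) le c x0])
  also have "\<dots> \<le> (SUP \<delta>\<in>{0<..}. pressure_delta X f \<psi> \<delta>) + ereal c"
    by (rule add_right_mono, rule SUP_upper) (use \<open>\<delta> > 0\<close> in simp)
  finally show "pressure_delta X f \<phi> \<delta> \<le> (SUP \<delta>\<in>{0<..}. pressure_delta X f \<psi> \<delta>) + ereal c" .
qed

lemma Pd_ge:
  assumes bdd: "\<And>n. bdd_above (ZS X f \<phi> n \<delta>)"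
    and ex: "\<And>n. \<exists>x\<in>X. real n * a \<le> birkhoff_sum f \<phi> n x"
  shows "ereal a \<le> pressure_delta X f \<phi> \<delta>"
proof -
  have "a \<le> ln (pressure_Z X f \<phi> n \<delta>) / real n" if "n \<ge> 1" for n
  proof -
    obtain x where x: "x \<in> X" "real n * a \<le> birkhoff_sum f \<phi> n x" using ex by blast
    have "exp (birkhoff_sum f \<phi> n x) \<le> pressure_Z X f \<phi> n \<delta>" by (rule Z_ge[OF bdd x(1)])
    then have "birkhoff_sum f \<phi> n x \<le> ln (pressure_Z X f \<phi> n \<delta>)"
      by (metis exp_gt_zero less_le_trans ln_exp ln_le_cancel_iff)
    then have "real n * a \<le> ln (pressure_Z X f \<phi> n \<delta>)" using x(2) by linarith
    then show ?thesis using that by (simp add: divide_simps mult.commute)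
  qed
  then have "ereal a \<le> liminf (\<lambda>n. ereal (ln (pressure_Z X f \<phi> n \<delta>) / real n))"
    by (intro Liminf_bounded) (auto simp: eventually_sequentially)
  also have "\<dots> \<le> pressure_delta X f \<phi> \<delta>"
    unfolding pressure_delta_def by (rule Liminf_le_Limsup) simp
  finally show ?thesis .
qed



lemma cont_bounded:
  fixes \<phi> :: "'a::metric_space \<Rightarrow> real"
  assumes "compact X" "continuous_on X \<phi>"
  shows "\<exists>B. \<forall>x\<in>X. \<bar>\<phi> x\<bar> \<le> B"
proof -
  have "bounded (\<phi> ` X)" using compact_continuous_image[OF assms(2,1)] compact_imp_bounded by blast
  then obtain B where "\<forall>y\<in>\<phi> ` X. norm y \<le> B" unfolding bounded_iff by blast
  then show ?thesis by auto
qed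

lemma inv_basic:
  assumes "\<mu> \<in> invariant_measures X f"
  shows "prob_space \<mu>" "space \<mu> = X" "f \<in> measurable \<mu> \<mu>" "distr \<mu> \<mu> f = \<mu>"
    "sets \<mu> = sets (restrict_space borel X)"
proof -
  have s: "sets \<mu> = sets (restrict_space borel X)" using assms unfolding invariant_measures_def by blast
  have "space \<mu> = space (restrict_space borel X)" by (rule sets_eq_imp_space_eq[OF s])
  then show "space \<mu> = X" by (simp add: space_restrict_space)
  show "sets \<mu> = sets (restrict_space borel X)" by (rule s)
  show "prob_space \<mu>" "f \<in> measurable \<mu> \<mu>" "distr \<mu> \<mu> f = \<mu>"
    using assms unfolding invariant_measures_def by blast+
qed

lemma cont_meas:
  assumes "\<mu> \<in> invariant_measures X f" "continuous_on X \<phi>"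
  shows "(\<phi>::_\<Rightarrow>real) \<in> borel_measurable \<mu>"
  using borel_measurable_continuous_on_restrict[OF assms(2)] inv_basic(5)[OF assms(1)]
    measurable_cong_sets[of \<mu> "restrict_space borel X" borel borel] by simp

lemma iter_meas:
  assumes "f \<in> measurable M M" shows "(f^^i) \<in> measurable M M"
proof (induction i)
  case 0 then show ?case by simp
next
  case (Suc i)
  have "f \<circ> (f^^i) \<in> measurable M M" by (rule measurable_comp[OF Suc assms])
  then show ?case by (simp add: comp_def)
qed

lemma inv_integral:
  assumes mu: "\<mu> \<in> invariant_measures X f" and phi: "(\<phi>::_\<Rightarrow>real) \<in> borel_measurable \<mu>"
  shows "(\<integral>x. \<phi> ((f^^i) x) \<partial>\<mu>) = (\<integral>x. \<phi> x \<partial>\<mu>)"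
proof (induction i)
  case 0 then show ?case by simp
next
  case (Suc i)
  note b = inv_basic[OF mu]
  have m: "(\<lambda>x. \<phi> ((f^^i) x)) \<in> borel_measurable \<mu>"
    using measurable_comp[OF iter_meas[OF b(3)] phi] by (simp add: comp_def)
  have "(\<integral>x. \<phi> ((f^^Suc i) x) \<partial>\<mu>) = (\<integral>x. (\<lambda>y. \<phi> ((f^^i) y)) (f x) \<partial>\<mu>)"
    by (simp only: funpow_Suc_right comp_def)
  also have "\<dots> = integral\<^sup>L (distr \<mu> \<mu> f) (\<lambda>y. \<phi> ((f^^i) y))"
    by (rule integral_distr[symmetric, OF b(3) m])
  also have "\<dots> = (\<integral>x. \<phi> ((f^^i) x) \<partial>\<mu>)" using b(4) by simp
  finally show ?case using Suc by simp
qed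

lemma inv_exists_point:
  assumes mu: "\<mu> \<in> invariant_measures X f" and X: "compact X" "continuous_on X f" "f ` X \<subseteq> X"
    and phi: "continuous_on X \<phi>"
  shows "\<exists>x\<in>X. real n * (\<integral>x. \<phi> x \<partial>\<mu>) \<le> birkhoff_sum f \<phi> n x"
proof -
  note b = inv_basic[OF mu]
  interpret prob_space \<mu> by (rule b(1))
  have m: "\<phi> \<in> borel_measurable \<mu>" by (rule cont_meas[OF mu phi])
  obtain B where B: "\<forall>x\<in>X. \<bar>\<phi> x\<bar> \<le> B" using cont_bounded[OF X(1) phi] by blast
  have int: "integrable \<mu> (\<lambda>x. \<phi> ((f^^i) x))" for i
  proof (rule integrable_const_bound[where B=B])
    show "AE x in \<mu>. norm (\<phi> ((f ^^ i) x)) \<le> B"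
    proof (rule AE_I2)
      fix x assume "x \<in> space \<mu>"
      then have "(f^^i) x \<in> X" using funpow_in[OF X(3), of x i] b(2) by simp
      then show "norm (\<phi> ((f ^^ i) x)) \<le> B" using B by simp
    qed
    show "(\<lambda>x. \<phi> ((f^^i) x)) \<in> borel_measurable \<mu>"
      using measurable_comp[OF iter_meas[OF b(3)] m] by (simp add: comp_def)
  qed
  have bc: "continuous_on X (birkhoff_sum f \<phi> n)"
    unfolding birkhoff_sum_def
  proof (intro continuous_on_sum)
    fix i
    have sub: "(f^^i) ` X \<subseteq> X" using funpow_in[OF X(3)] by blast
    show "continuous_on X (\<lambda>x. \<phi> ((f^^i) x))"
      using continuous_on_compose[OF funpow_cont[OF X(2,3), of i] continuous_on_subset[OF phi sub]]
      by (simp add: comp_def)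
  qed
  have Xne: "X \<noteq> {}" using not_empty b(2) by simp
  obtain x where x: "x \<in> X" "\<forall>y\<in>X. birkhoff_sum f \<phi> n y \<le> birkhoff_sum f \<phi> n x"
    using continuous_attains_sup[OF X(1) Xne bc] by blast
  have "real n * (\<integral>x. \<phi> x \<partial>\<mu>) = (\<Sum>i<n. \<integral>x. \<phi> ((f^^i) x) \<partial>\<mu>)"
    using inv_integral[OF mu m] by simp
  also have "\<dots> = (\<integral>y. birkhoff_sum f \<phi> n y \<partial>\<mu>)"
    unfolding birkhoff_sum_def by (rule Bochner_Integration.integral_sum[symmetric]) (rule int)
  also have "\<dots> \<le> birkhoff_sum f \<phi> n x"
  proof (rule integral_le_const)
    show "integrable \<mu> (birkhoff_sum f \<phi> n)"
      unfolding birkhoff_sum_def by (rule Bochner_Integration.integrable_sum) (rule int)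
    show "AE y in \<mu>. birkhoff_sum f \<phi> n y \<le> birkhoff_sum f \<phi> n x"
      using x(2) b(2) by (intro AE_I2) simp
  qed
  finally show ?thesis using x(1) by blast
qed

lemma P_ge:
  assumes mu: "\<mu> \<in> invariant_measures X f" and X: "compact X" "continuous_on X f" "f ` X \<subseteq> X"
    and phi: "continuous_on X \<phi>"
  shows "ereal (\<integral>x. \<phi> x \<partial>\<mu>) \<le> top_pressure X f \<phi>"
proof -
  obtain B where B: "\<forall>x\<in>X. \<bar>\<phi> x\<bar> \<le> B" using cont_bounded[OF X(1) phi] by blast
  have "ereal (\<integral>x. \<phi> x \<partial>\<mu>) \<le> pressure_delta X f \<phi> 1"
    by (rule Pd_ge[OF Z_bdd[OF X zero_less_one B]]) (rule inv_exists_point[OF mu X phi])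
  also have "\<dots> \<le> top_pressure X f \<phi>" unfolding top_pressure_def by (rule SUP_upper) simp
  finally show ?thesis .
qed



lemma cont_integrable:
  assumes mu: "\<mu> \<in> invariant_measures X f" and X: "compact X" and phi: "continuous_on X \<phi>"
  shows "integrable \<mu> (\<phi>::_\<Rightarrow>real)"
proof -
  note b = inv_basic[OF mu]
  interpret prob_space \<mu> by (rule b(1))
  obtain B where B: "\<forall>x\<in>X. \<bar>\<phi> x\<bar> \<le> B" using cont_bounded[OF X phi] by blast
  show ?thesis
  proof (rule integrable_const_bound[where B=B])
    show "AE x in \<mu>. norm (\<phi> x) \<le> B" using B b(2) by (intro AE_I2) simp
    show "\<phi> \<in> borel_measurable \<mu>" by (rule cont_meas[OF mu phi])
  qed
qed

theorem lemma4p5: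
  fixes X :: "'a::metric_space set" and f :: "'a \<Rightarrow> 'a"
    and \<Xi> :: "'d::finite \<Rightarrow> 'a \<Rightarrow> real" and \<xi>0 :: "'a \<Rightarrow> real" and \<epsilon> :: real
  assumes "compact X"
    and "continuous_on X f" and "f ` X \<subseteq> X"
    and "top_entropy X f < \<infinity>"
    and "\<And>i. continuous_on X (\<Xi> i)"
    and "continuous_on X \<xi>0"
    and "\<epsilon> > 0"
    and "cball (0 :: real^'d) \<epsilon> \<subseteq>
           {(\<chi> i. integral\<^sup>L \<mu> (\<Xi> i)) | \<mu>. \<mu> \<in> invariant_measures X f}"
  defines "P0 \<equiv> (INF q::real^'d. top_pressure X f (\<lambda>x. (\<Sum>i\<in>UNIV. q $ i * \<Xi> i x) + \<xi>0 x))"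
  shows "(\<forall>q::real^'d. norm q > (real_of_ereal (top_pressure X f \<xi>0) + sup_norm X \<xi>0) / \<epsilon> \<longrightarrow>
            top_pressure X f (\<lambda>x. (\<Sum>i\<in>UNIV. q $ i * \<Xi> i x) + \<xi>0 x) > P0)
       \<and> (\<exists>qb::real^'d. norm qb \<le> (real_of_ereal (top_pressure X f \<xi>0) + sup_norm X \<xi>0) / \<epsilon> \<and>
            top_pressure X f (\<lambda>x. (\<Sum>i\<in>UNIV. qb $ i * \<Xi> i x) + \<xi>0 x) = P0)"
proof -
  note X = assms(1-3)
  note cb = assms(8)
  define \<phi> where "\<phi> q x = (\<Sum>i\<in>UNIV. q $ i * \<Xi> i x) + \<xi>0 x" for q :: "real^'d" and x
  define F where "F q = top_pressure X f (\<phi> q)" for q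
  have Fdef: "top_pressure X f (\<lambda>x. (\<Sum>i\<in>UNIV. q $ i * \<Xi> i x) + \<xi>0 x) = F q" for q
    unfolding F_def \<phi>_def ..
  have P0eq: "P0 = (INF q. F q)" unfolding P0_def Fdef ..
  have phicont: "continuous_on X (\<phi> q)" for q
    unfolding \<phi>_def
    by (intro continuous_on_add continuous_on_sum continuous_on_mult continuous_on_const assms(5,6))
  have F0: "F 0 = top_pressure X f \<xi>0" unfolding F_def \<phi>_def by simp
  obtain \<mu>0 where mu0: "\<mu>0 \<in> invariant_measures X f"
  proof -
    have "(0::real^'d) \<in> cball 0 \<epsilon>" using assms(7) by simp
    then show ?thesis using cb that by blast
  qed
  have "X \<noteq> {}" using prob_space.not_empty[OF inv_basic(1)[OF mu0]] inv_basic(2)[OF mu0] by simp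
  then obtain x0 where x0: "x0 \<in> X" by blast
  define S where "S = sup_norm X \<xi>0"
  obtain B0 where B0: "\<forall>x\<in>X. \<bar>\<xi>0 x\<bar> \<le> B0" using cont_bounded[OF X(1) assms(6)] by blast
  have bddS: "bdd_above ((\<lambda>x. \<bar>\<xi>0 x\<bar>) ` X)" using B0 by (auto intro: bdd_aboveI2)
  have Sge: "\<bar>\<xi>0 x\<bar> \<le> S" if "x \<in> X" for x
    unfolding S_def sup_norm_def by (rule cSup_upper[OF _ bddS]) (use that in blast)
  have upper: "top_pressure X f \<psi> < \<infinity>" if psic: "continuous_on X \<psi>" for \<psi>
  proof -
    obtain B where B: "\<forall>x\<in>X. \<bar>\<psi> x\<bar> \<le> B" using cont_bounded[OF X(1) psic] by blast
    have "B \<ge> 0" using B x0 by force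
    have "top_pressure X f \<psi> \<le> top_pressure X f (\<lambda>_. 0) + ereal B"
      by (rule P_le[where \<psi>="\<lambda>_. 0" and B=0 and c=B, OF X _ _ _ x0]) (use B \<open>B \<ge> 0\<close> in auto)
    also have "\<dots> < \<infinity>" using assms(4) unfolding top_entropy_def by simp
    finally show ?thesis .
  qed
  have lower: "top_pressure X f \<psi> > -\<infinity>" if "continuous_on X \<psi>" for \<psi>
    using P_ge[OF mu0 X that] by (metis MInfty_neq_ereal(1) ereal_infty_less(2) order_less_le_trans)
  define G where "G q = real_of_ereal (F q)" for q
  have FG: "F q = ereal (G q)" for q
    using upper[OF phicont[of q]] lower[OF phicont[of q]] unfolding G_def F_def
    by (cases "top_pressure X f (\<phi> q)") auto
  define Pr where "Pr = real_of_ereal (top_pressure X f \<xi>0)"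
  have Pr: "top_pressure X f \<xi>0 = ereal Pr" using FG[of 0] F0 G_def Pr_def by simp
  have int_xi0: "(\<integral>x. \<xi>0 x \<partial>\<mu>) \<ge> - S" if mu: "\<mu> \<in> invariant_measures X f" for \<mu>
  proof -
    interpret prob_space \<mu> by (rule inv_basic(1)[OF mu])
    show ?thesis
    proof (rule integral_ge_const)
      show "integrable \<mu> \<xi>0" by (rule cont_integrable[OF mu X(1) assms(6)])
      show "AE x in \<mu>. - S \<le> \<xi>0 x" using Sge inv_basic(2)[OF mu] by (intro AE_I2) force
    qed
  qed
  have CS: "Pr + S \<ge> 0"
  proof -
    have "ereal (\<integral>x. \<xi>0 x \<partial>\<mu>0) \<le> ereal Pr" using P_ge[OF mu0 X assms(6)] Pr by simp
    then show ?thesis using int_xi0[OF mu0] by simp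
  qed
  define C where "C = (Pr + S) / \<epsilon>"
  have C0: "C \<ge> 0" unfolding C_def using CS assms(7) by simp
  have big: "F q > top_pressure X f \<xi>0" if q: "norm q > C" for q
  proof -
    have qn: "norm q > 0" using q C0 by linarith
    define v where "v = (\<epsilon> / norm q) *\<^sub>R q"
    have "norm v = \<epsilon>" unfolding v_def using qn assms(7) by simp
    then have "v \<in> cball 0 \<epsilon>" by simp
    then obtain \<mu> where mu: "\<mu> \<in> invariant_measures X f" and v: "v = (\<chi> i. integral\<^sup>L \<mu> (\<Xi> i))"
      using cb by blast
    have vi: "integral\<^sup>L \<mu> (\<Xi> i) = \<epsilon> / norm q * q $ i" for i
      using arg_cong[OF v, of "\<lambda>w. w $ i"] unfolding v_def by simp
    have intphi: "(\<integral>x. \<phi> q x \<partial>\<mu>) = (\<Sum>i\<in>UNIV. q $ i * integral\<^sup>L \<mu> (\<Xi> i)) + (\<integral>x. \<xi>0 x \<partial>\<mu>)"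
    proof -
      have ii: "integrable \<mu> (\<lambda>x. q $ i * \<Xi> i x)" for i
        using cont_integrable[OF mu X(1) assms(5)[of i]] by simp
      have "(\<integral>x. \<phi> q x \<partial>\<mu>) = (\<integral>x. (\<Sum>i\<in>UNIV. q $ i * \<Xi> i x) \<partial>\<mu>) + (\<integral>x. \<xi>0 x \<partial>\<mu>)"
        unfolding \<phi>_def
        by (rule Bochner_Integration.integral_add)
          (auto intro!: Bochner_Integration.integrable_sum ii cont_integrable[OF mu X(1) assms(6)])
      also have "(\<integral>x. (\<Sum>i\<in>UNIV. q $ i * \<Xi> i x) \<partial>\<mu>) = (\<Sum>i\<in>UNIV. q $ i * integral\<^sup>L \<mu> (\<Xi> i))"
        by (subst Bochner_Integration.integral_sum) (auto intro: ii cont_integrable[OF mu X(1) assms(5)])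
      finally show ?thesis .
    qed
    have "(\<Sum>i\<in>UNIV. q $ i * integral\<^sup>L \<mu> (\<Xi> i)) = \<epsilon> / norm q * (\<Sum>i\<in>UNIV. q $ i * q $ i)"
      unfolding vi by (simp add: sum_distrib_left algebra_simps)
    also have "(\<Sum>i\<in>UNIV. q $ i * q $ i) = norm q ^ 2"
      by (simp add: power2_norm_eq_inner inner_vec_def)
    also have "\<epsilon> / norm q * norm q ^ 2 = \<epsilon> * norm q" using qn by (simp add: power2_eq_square)
    finally have "(\<integral>x. \<phi> q x \<partial>\<mu>) = \<epsilon> * norm q + (\<integral>x. \<xi>0 x \<partial>\<mu>)" using intphi by simp
    then have "(\<integral>x. \<phi> q x \<partial>\<mu>) \<ge> \<epsilon> * norm q - S" using int_xi0[OF mu] by simp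
    moreover have "\<epsilon> * norm q > \<epsilon> * C" using q assms(7) by simp
    moreover have "\<epsilon> * C = Pr + S" unfolding C_def using assms(7) by simp
    ultimately have "Pr < (\<integral>x. \<phi> q x \<partial>\<mu>)" by linarith
    then have "ereal Pr < ereal (\<integral>x. \<phi> q x \<partial>\<mu>)" by simp
    also have "\<dots> \<le> F q" unfolding F_def by (rule P_ge[OF mu X phicont])
    finally show ?thesis using Pr by simp
  qed
  have part1: "\<forall>q. norm q > C \<longrightarrow> F q > (INF q. F q)"
  proof (intro allI impI)
    fix q :: "real^'d" assume "norm q > C"
    have "(INF q. F q) \<le> F 0" by (rule INF_lower) simp
    also have "\<dots> < F q" using big[OF \<open>norm q > C\<close>] F0 by simp
    finally show "F q > (INF q. F q)" .
  qed
  obtain BX where BX: "\<forall>i. \<forall>x\<in>X. \<bar>\<Xi> i x\<bar> \<le> BX"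
  proof -
    have "\<forall>i. \<exists>B. \<forall>x\<in>X. \<bar>\<Xi> i x\<bar> \<le> B" using cont_bounded[OF X(1) assms(5)] by blast
    then obtain Bf where Bf: "\<forall>i. \<forall>x\<in>X. \<bar>\<Xi> i x\<bar> \<le> Bf i" by metis
    have "\<bar>\<Xi> i x\<bar> \<le> (\<Sum>j\<in>UNIV. \<bar>Bf j\<bar>)" if "x \<in> X" for i x
    proof -
      have "\<bar>\<Xi> i x\<bar> \<le> Bf i" using Bf that by blast
      then have "\<bar>\<Xi> i x\<bar> \<le> \<bar>Bf i\<bar>" by linarith
      also have "\<dots> \<le> (\<Sum>j\<in>UNIV. \<bar>Bf j\<bar>)" by (rule member_le_sum) auto
      finally show ?thesis .
    qed
    then show ?thesis using that by blast
  qed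
  have BX0: "BX \<ge> 0" using BX x0 by force
  define L where "L = real CARD('d) * BX"
  have L0: "L \<ge> 0" unfolding L_def using BX0 by simp
  have Fle: "F q \<le> F p + ereal (L * dist q p)" for q p
  proof -
    have diff: "\<phi> q x \<le> \<phi> p x + L * dist q p" if x: "x \<in> X" for x
    proof -
      have "\<phi> q x - \<phi> p x = (\<Sum>i\<in>UNIV. (q $ i - p $ i) * \<Xi> i x)"
        unfolding \<phi>_def by (simp add: sum_subtractf[symmetric] algebra_simps)
      also have "\<dots> \<le> (\<Sum>i\<in>(UNIV::'d set). dist q p * BX)"
      proof (rule sum_mono)
        fix i
        have "(q $ i - p $ i) * \<Xi> i x \<le> \<bar>q $ i - p $ i\<bar> * \<bar>\<Xi> i x\<bar>"
          by (metis abs_ge_self abs_mult)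
        also have "\<dots> \<le> dist q p * BX"
        proof (rule mult_mono)
          show "\<bar>q $ i - p $ i\<bar> \<le> dist q p"
            using component_le_norm_cart[of "q - p" i] by (simp add: dist_norm)
          show "\<bar>\<Xi> i x\<bar> \<le> BX" using BX x by blast
        qed (auto simp: BX0)
        finally show "(q $ i - p $ i) * \<Xi> i x \<le> dist q p * BX" .
      qed
      also have "\<dots> = L * dist q p" unfolding L_def by simp
      finally show ?thesis by simp
    qed
    obtain Bp where Bp: "\<forall>x\<in>X. \<bar>\<phi> p x\<bar> \<le> Bp" using cont_bounded[OF X(1) phicont[of p]] by blast
    show ?thesis unfolding F_def
      by (rule P_le[OF X Bp _ _ x0]) (use diff L0 in auto)
  qed
  have Glip: "dist (G q) (G p) \<le> L * dist q p" for q p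
  proof -
    have "G q \<le> G p + L * dist q p" using Fle[of q p] unfolding FG by simp
    moreover have "G p \<le> G q + L * dist q p" using Fle[of p q] unfolding FG by (simp add: dist_commute)
    ultimately show ?thesis by (simp add: dist_real_def abs_le_iff)
  qed
  have Gcont: "continuous_on UNIV G"
    by (rule lipschitz_on_continuous_on, rule lipschitz_onI[OF Glip L0])
  obtain qb where qb: "qb \<in> cball 0 C" "\<forall>y\<in>cball 0 C. G qb \<le> G y"
    using continuous_attains_inf[OF compact_cball, of 0 C G] C0
      continuous_on_subset[OF Gcont] by auto
  have qbmin: "F qb \<le> F q" for q
  proof (cases "q \<in> cball 0 C")
    case True then show ?thesis using qb(2) FG by simp
  next
    case False
    then have "norm q > C" by simp
    have "F qb \<le> F 0" using qb(2) C0 FG by simp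
    also have "\<dots> < F q" using big[OF \<open>norm q > C\<close>] F0 by simp
    finally show ?thesis by simp
  qed
  have "F qb = (INF q. F q)"
    by (rule antisym) (auto intro: INF_lower INF_greatest qbmin)
  then have part2: "\<exists>qb. norm qb \<le> C \<and> F qb = (INF q. F q)" using qb(1) by auto
  show ?thesis unfolding Fdef P0eq using part1 part2 unfolding C_def Pr_def S_def by blast
qed

end
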